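(* Let $q\ge 2$, $r\ge 1$, $\rho\ge 2$ be integers and $N=r+\rho-1$. Assume that there exists a $q$-ary MDS code of length $N$ and minimum distance $\rho$. Then $R_q(r,\rho,0)=\frac{r}{N}$.
   Context: A $q$-ary code of length $n$ is a subset $\mathcal{C}\subseteq Q^n$, $|Q|=q$, with minimum distance the minimum Hamming distance between distinct codewords and dimension $k=\log_q|\mathcal{C}|$. For $I\subseteq[n]$, $\mathcal{C}_I$ is the projection onto coordinates in $I$. $\mathcal{C}$ is an $(n,k,r,\rho)$ LRC code if every coordinate $i\in[n]$ lies in a subset $\mathcal{R}_i$ of size at most $r+\rho-1$ with $\mathcal{C}_{\mathcal{R}_i}$ of minimum distance at least $\rho$. Let $M_q(n,r,\rho,\delta n)$ be the maximum cardinality of a $q$-ary $(n,k,r,\rho)$ LRC code with minimum distance $\delta n$, and $R_q(r,\rho,\delta)=\limsup_{n\to\infty}\frac1n\log_q M_q(n,r,\rho,\delta n)$. An MDS code of length $N$ and distance $\rho$ is a $q$-ary code of length $N$, minimum distance $\rho$ and cardinality $q^{N-\rho+1}$. *)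

theory Defs
  imports Complex_Main "HOL-Library.Liminf_Limsup" "HOL-Library.Extended_Real"
begin

definition words :: "nat \<Rightarrow> nat \<Rightarrow> nat list set" where
  "words q n = {xs. length xs = n \<and> set xs \<subseteq> {..<q}}"

definition is_code :: "nat \<Rightarrow> nat \<Rightarrow> nat list set \<Rightarrow> bool" where
  "is_code q n C \<longleftrightarrow> C \<subseteq> words q n"

definition hdist_on :: "nat set \<Rightarrow> nat list \<Rightarrow> nat list \<Rightarrow> nat" where
  "hdist_on I x y = card {i \<in> I. x ! i \<noteq> y ! i}"

definition hdist :: "nat list \<Rightarrow> nat list \<Rightarrow> nat" where
  "hdist x y = hdist_on {..<length x} x y"

definition min_dist :: "nat list set \<Rightarrow> nat" where
  "min_dist C = Min {hdist x y | x y. x \<in> C \<and> y \<in> C \<and> x \<noteq> y}"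

text \<open>Minimum distance at least d (d real, vacuous for codes with at most one word).\<close>
definition min_dist_ge :: "real \<Rightarrow> nat list set \<Rightarrow> bool" where
  "min_dist_ge d C \<longleftrightarrow> (\<forall>x\<in>C. \<forall>y\<in>C. x \<noteq> y \<longrightarrow> d \<le> real (hdist x y))"

text \<open>(n,k,r,rho) LRC code (k = log_q |C|, so C nonempty): every coordinate i lies
in a set R_i of size at most r+rho-1 such that the projection of C onto R_i has
minimum distance at least rho.\<close>
definition is_LRC :: "nat \<Rightarrow> nat \<Rightarrow> nat \<Rightarrow> nat \<Rightarrow> nat list set \<Rightarrow> bool" where
  "is_LRC q n r \<rho> C \<longleftrightarrow> is_code q n C \<and> C \<noteq> {} \<and>
     (\<forall>i<n. \<exists>R. i \<in> R \<and> R \<subseteq> {..<n} \<and> card R \<le> r + \<rho> - 1 \<and>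
        (\<forall>x\<in>C. \<forall>y\<in>C. hdist_on R x y \<noteq> 0 \<longrightarrow> \<rho> \<le> hdist_on R x y))"

definition M_LRC :: "nat \<Rightarrow> nat \<Rightarrow> nat \<Rightarrow> nat \<Rightarrow> real \<Rightarrow> nat" where
  "M_LRC q n r \<rho> d = Max (card ` {C. is_LRC q n r \<rho> C \<and> min_dist_ge d C})"

definition R_LRC :: "nat \<Rightarrow> nat \<Rightarrow> nat \<Rightarrow> real \<Rightarrow> ereal" where
  "R_LRC q r \<rho> \<delta> = limsup (\<lambda>n. ereal (log (real q) (real (M_LRC q n r \<rho> (\<delta> * real n))) / real n))"

definition is_MDS :: "nat \<Rightarrow> nat \<Rightarrow> nat \<Rightarrow> nat list set \<Rightarrow> bool" where
  "is_MDS q N \<rho> C \<longleftrightarrow> is_code q N C \<and> min_dist C = \<rho> \<and> card C = q ^ (N - \<rho> + 1)"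

end

theory Submission
  imports Defs "HOL-Library.FuncSet"
begin


definition prj :: "nat set \<Rightarrow> nat list \<Rightarrow> nat \<Rightarrow> nat" where
  "prj S x = restrict (\<lambda>i. x ! i) S"

lemma prj_eq_iff: "prj S x = prj S y \<longleftrightarrow> (\<forall>i\<in>S. x ! i = y ! i)"
  by (auto simp: prj_def fun_eq_iff restrict_def)

lemma singleton_bound:
  assumes F: "\<forall>x\<in>F. set x \<subseteq> {..<q} \<and> (\<forall>i\<in>T. i < length x)"
    and fT: "finite T"
    and dist: "\<forall>x\<in>F. \<forall>y\<in>F. prj T x \<noteq> prj T y \<longrightarrow> \<rho> \<le> card {i\<in>T. x!i \<noteq> y!i}"
    and rho: "\<rho> \<ge> 1"
  shows "card (prj T ` F) \<le> q ^ (card T + 1 - \<rho>)"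
proof (cases "card T + 1 \<le> \<rho>")
  case True
  have eq: "prj T x = prj T y" if "x \<in> F" "y \<in> F" for x y
  proof (rule ccontr)
    assume "prj T x \<noteq> prj T y"
    hence "\<rho> \<le> card {i\<in>T. x!i \<noteq> y!i}" using dist that by blast
    moreover have "card {i\<in>T. x!i \<noteq> y!i} \<le> card T" using fT by (intro card_mono) auto
    ultimately show False using True by linarith
  qed
  show ?thesis
  proof (cases "F = {}")
    case True thus ?thesis by simp
  next
    case False
    then obtain x0 where "x0 \<in> F" by blast
    hence "prj T ` F = {prj T x0}" using eq by blast
    thus ?thesis using \<open>card T + 1 \<le> \<rho>\<close> by simp
  qed
next
  case False
  have le: "card T + 1 - \<rho> \<le> card T" using rho by simp
  obtain T' where T': "T' \<subseteq> T" "card T' = card T + 1 - \<rho>" "finite T'"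
    using obtain_subset_with_card_n[OF le] by metis
  have inj: "inj_on (\<lambda>f. restrict f T') (prj T ` F)"
  proof (rule inj_onI)
    fix a b assume "a \<in> prj T ` F" "b \<in> prj T ` F" and ab: "restrict a T' = restrict b T'"
    then obtain x y where xy: "x \<in> F" "y \<in> F" "a = prj T x" "b = prj T y" by blast
    have agree: "\<forall>i\<in>T'. x!i = y!i"
    proof
      fix i assume i: "i \<in> T'"
      have "restrict a T' i = restrict b T' i" using ab by simp
      moreover have "i \<in> T" using i T'(1) by auto
      ultimately show "x!i = y!i" using i xy by (simp add: prj_def)
    qed
    show "a = b"
    proof (rule ccontr)
      assume "a \<noteq> b"
      hence "\<rho> \<le> card {i\<in>T. x!i \<noteq> y!i}" using dist xy by blast
      moreover have "{i\<in>T. x!i \<noteq> y!i} \<subseteq> T - T'" using agree by auto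
      hence "card {i\<in>T. x!i \<noteq> y!i} \<le> card (T - T')" using fT by (intro card_mono) auto
      moreover have "card (T - T') = card T - card T'" using T' fT by (simp add: card_Diff_subset)
      ultimately show False using T'(2) False rho by linarith
    qed
  qed
  have img: "(\<lambda>f. restrict f T') ` prj T ` F \<subseteq> PiE T' (\<lambda>_. {..<q})"
  proof
    fix g assume "g \<in> (\<lambda>f. restrict f T') ` prj T ` F"
    then obtain x where x: "x \<in> F" "g = restrict (prj T x) T'" by blast
    show "g \<in> PiE T' (\<lambda>_. {..<q})"
    proof (rule PiE_I)
      fix i assume "i \<in> T'"
      hence "i \<in> T" using T' by auto
      hence "x ! i \<in> set x" using F x by auto
      hence "x ! i < q" using F x by auto
      thus "g i \<in> {..<q}" using x \<open>i \<in> T\<close> \<open>i \<in> T'\<close> by (simp add: prj_def)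
    next
      fix i assume "i \<notin> T'" thus "g i = undefined" using x by simp
    qed
  qed
  have "card (prj T ` F) \<le> card (PiE T' (\<lambda>_. {..<q}))"
    by (rule card_inj_on_le[OF inj img]) (simp add: finite_PiE T'(3))
  also have "\<dots> = q ^ card T'" using T'(3) by (simp add: card_PiE)
  finally show ?thesis using T'(2) by simp
qed



lemma step_bound:
  assumes C: "\<forall>x\<in>C. length x = n \<and> set x \<subseteq> {..<q}" and fC: "finite C"
    and R: "R \<subseteq> {..<n}" and S: "S \<subseteq> {..<n}"
    and Rd: "\<forall>x\<in>C. \<forall>y\<in>C. hdist_on R x y \<noteq> 0 \<longrightarrow> \<rho> \<le> hdist_on R x y"
    and rho: "\<rho> \<ge> 1"
  shows "card (prj (S \<union> R) ` C) \<le> card (prj S ` C) * q ^ (card (R - S) + 1 - \<rho>)"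
proof -
  define F where "F u = {x\<in>C. prj S x = u}" for u
  have fR: "finite R" using R finite_subset by blast
  have U: "prj (S \<union> R) ` C = (\<Union>u\<in>prj S ` C. prj (S \<union> R) ` F u)" by (auto simp: F_def)
  have each: "card (prj (S \<union> R) ` F u) \<le> q ^ (card (R - S) + 1 - \<rho>)" for u
  proof -
    have inj: "inj_on (\<lambda>f. restrict f (R - S)) (prj (S \<union> R) ` F u)"
    proof (rule inj_onI)
      fix a b assume "a \<in> prj (S \<union> R) ` F u" "b \<in> prj (S \<union> R) ` F u"
        and ab: "restrict a (R - S) = restrict b (R - S)"
      then obtain x y where xy: "x \<in> F u" "y \<in> F u" "a = prj (S \<union> R) x" "b = prj (S \<union> R) y" by blast
      have "prj S x = prj S y" using xy by (simp add: F_def)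
      hence s: "\<forall>i\<in>S. x!i = y!i" by (simp add: prj_eq_iff)
      have r: "\<forall>i\<in>R - S. x!i = y!i"
      proof
        fix i assume i: "i \<in> R - S"
        have "restrict a (R - S) i = restrict b (R - S) i" using ab by simp
        thus "x!i = y!i" using i xy by (simp add: prj_def)
      qed
      have "\<forall>i\<in>S \<union> R. x!i = y!i" using s r by blast
      thus "a = b" using xy by (simp add: prj_eq_iff)
    qed
    have img: "(\<lambda>f. restrict f (R - S)) ` prj (S \<union> R) ` F u \<subseteq> prj (R - S) ` F u"
    proof
      fix g assume "g \<in> (\<lambda>f. restrict f (R - S)) ` prj (S \<union> R) ` F u"
      then obtain x where x: "x \<in> F u" "g = restrict (prj (S \<union> R) x) (R - S)" by blast
      have "g = prj (R - S) x" using x by (auto simp: prj_def restrict_def fun_eq_iff)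
      thus "g \<in> prj (R - S) ` F u" using x by blast
    qed
    have fF: "finite (F u)" using fC by (simp add: F_def)
    have "card (prj (S \<union> R) ` F u) \<le> card (prj (R - S) ` F u)"
      by (rule card_inj_on_le[OF inj img]) (use fF in simp)
    also have "\<dots> \<le> q ^ (card (R - S) + 1 - \<rho>)"
    proof (rule singleton_bound)
      show "\<forall>x\<in>F u. set x \<subseteq> {..<q} \<and> (\<forall>i\<in>R - S. i < length x)"
        using C R by (auto simp: F_def)
      show "finite (R - S)" using fR by simp
      show "1 \<le> \<rho>" by (rule rho)
      show "\<forall>x\<in>F u. \<forall>y\<in>F u. prj (R - S) x \<noteq> prj (R - S) y \<longrightarrow> \<rho> \<le> card {i \<in> R - S. x ! i \<noteq> y ! i}"
      proof (intro ballI impI)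
        fix x y assume xy: "x \<in> F u" "y \<in> F u" and ne: "prj (R - S) x \<noteq> prj (R - S) y"
        have "prj S x = prj S y" using xy by (simp add: F_def)
        hence s: "\<forall>i\<in>S. x!i = y!i" by (simp add: prj_eq_iff)
        have eqset: "{i\<in>R. x!i \<noteq> y!i} = {i \<in> R - S. x ! i \<noteq> y ! i}" using s by auto
        obtain i where i: "i \<in> R - S" "x!i \<noteq> y!i" using ne by (auto simp: prj_eq_iff)
        have "{i \<in> R - S. x ! i \<noteq> y ! i} \<noteq> {}" using i by blast
        hence "card {i \<in> R - S. x ! i \<noteq> y ! i} \<noteq> 0" using fR by simp
        hence "hdist_on R x y \<noteq> 0" using eqset by (simp add: hdist_on_def)
        hence "\<rho> \<le> hdist_on R x y" using Rd xy by (auto simp: F_def)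
        thus "\<rho> \<le> card {i \<in> R - S. x ! i \<noteq> y ! i}" using eqset by (simp add: hdist_on_def)
      qed
    qed
    finally show ?thesis .
  qed
  have "card (prj (S \<union> R) ` C) \<le> (\<Sum>u\<in>prj S ` C. card (prj (S \<union> R) ` F u))"
    unfolding U by (rule card_UN_le) (use fC in simp)
  also have "\<dots> \<le> (\<Sum>u\<in>prj S ` C. q ^ (card (R - S) + 1 - \<rho>))"
    by (rule sum_mono) (rule each)
  also have "\<dots> = card (prj S ` C) * q ^ (card (R - S) + 1 - \<rho>)" by simp
  finally show ?thesis .
qed



lemma pow_bound:
  fixes q t r \<rho> :: nat
  assumes q: "q \<ge> 1" and t: "t \<le> r + \<rho> - 1" and rho: "\<rho> \<ge> 1" and r: "r \<ge> 1"
  shows "real (q ^ (t + 1 - \<rho>)) \<le> real q powr (real t * real r / real (r + \<rho> - 1))"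
proof -
  have N: "real (r + \<rho> - 1) = real r + real \<rho> - 1" using rho by (simp add: of_nat_diff)
  have Npos: "real r + real \<rho> - 1 > 0" using r rho by simp
  have e: "real (t + 1 - \<rho>) \<le> real t * real r / real (r + \<rho> - 1)"
  proof (cases "t + 1 \<le> \<rho>")
    case True thus ?thesis by simp
  next
    case False
    hence E: "real (t + 1 - \<rho>) = real t + 1 - real \<rho>" by (simp add: of_nat_diff)
    have tt: "real t \<le> real r + real \<rho> - 1"
    proof -
      have "real t \<le> real (r + \<rho> - 1)" using t by (simp only: of_nat_le_iff)
      thus ?thesis using N by linarith
    qed
    have "real t * (real \<rho> - 1) \<le> (real r + real \<rho> - 1) * (real \<rho> - 1)"
      using tt rho by (intro mult_right_mono) auto
    hence "(real t + 1 - real \<rho>) * (real r + real \<rho> - 1) \<le> real t * real r"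
      by (simp add: algebra_simps)
    thus ?thesis unfolding E N using Npos by (simp add: le_divide_eq)
  qed
  have "real (q ^ (t + 1 - \<rho>)) = real q powr real (t + 1 - \<rho>)"
    using q by (simp add: powr_realpow)
  also have "\<dots> \<le> real q powr (real t * real r / real (r + \<rho> - 1))"
    using e q by (intro powr_mono) auto
  finally show ?thesis .
qed

lemma LRC_upper:
  assumes L: "is_LRC q n r \<rho> C" and q: "q \<ge> 2" and rho: "\<rho> \<ge> 2" and r: "r \<ge> 1"
  shows "real (card C) \<le> real q powr (real n * real r / real (r + \<rho> - 1))"
proof -
  define N where "N = r + \<rho> - 1"
  have Cw: "\<forall>x\<in>C. length x = n \<and> set x \<subseteq> {..<q}" and Cne: "C \<noteq> {}"
    and loc: "\<forall>i<n. \<exists>R. i \<in> R \<and> R \<subseteq> {..<n} \<and> card R \<le> N \<and>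
        (\<forall>x\<in>C. \<forall>y\<in>C. hdist_on R x y \<noteq> 0 \<longrightarrow> \<rho> \<le> hdist_on R x y)"
  proof -
    have "C \<subseteq> words q n" "C \<noteq> {}" and "\<forall>i<n. \<exists>R. i \<in> R \<and> R \<subseteq> {..<n} \<and> card R \<le> N \<and>
        (\<forall>x\<in>C. \<forall>y\<in>C. hdist_on R x y \<noteq> 0 \<longrightarrow> \<rho> \<le> hdist_on R x y)"
      using L unfolding is_LRC_def is_code_def N_def by blast+
    thus "\<forall>x\<in>C. length x = n \<and> set x \<subseteq> {..<q}" "C \<noteq> {}" "\<forall>i<n. \<exists>R. i \<in> R \<and> R \<subseteq> {..<n} \<and> card R \<le> N \<and>
        (\<forall>x\<in>C. \<forall>y\<in>C. hdist_on R x y \<noteq> 0 \<longrightarrow> \<rho> \<le> hdist_on R x y)"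
      unfolding words_def by blast+
  qed
  have fC: "finite C"
  proof (rule finite_subset)
    show "C \<subseteq> {xs. set xs \<subseteq> {..<q} \<and> length xs = n}" using Cw by auto
    show "finite {xs. set xs \<subseteq> {..<q} \<and> length xs = n}" by (rule finite_lists_length_eq) simp
  qed
  have Npos: "real N > 0" using r rho by (simp add: N_def)
  have main: "\<forall>S. n - card S = m \<longrightarrow> S \<subseteq> {..<n} \<longrightarrow>
     real (card (prj {..<n} ` C)) \<le> real (card (prj S ` C)) * real q powr (real (n - card S) * real r / real N)" for m
  proof (induction m rule: less_induct)
    case (less m)
    show ?case
    proof (intro allI impI)
      fix S assume m: "n - card S = m" and S: "S \<subseteq> {..<n}"
      have fS: "finite S" using S finite_subset by blast
      have cS: "card S \<le> n" using card_mono[OF _ S] by simp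
      show "real (card (prj {..<n} ` C)) \<le> real (card (prj S ` C)) * real q powr (real (n - card S) * real r / real N)"
      proof (cases "S = {..<n}")
        case True
        have "real q powr (real (n - card S) * real r / real N) = 1" using True q by simp
        thus ?thesis using True by simp
      next
        case False
        have "\<not> ({..<n} \<subseteq> S)" using False S subset_antisym by blast
        then obtain i where i: "i < n" "i \<notin> S" by (auto simp: subset_iff)
        have ex: "\<exists>R. i \<in> R \<and> R \<subseteq> {..<n} \<and> card R \<le> N \<and>
          (\<forall>x\<in>C. \<forall>y\<in>C. hdist_on R x y \<noteq> 0 \<longrightarrow> \<rho> \<le> hdist_on R x y)"
          using loc[rule_format, OF i(1)] .
        then obtain R where R0: "i \<in> R \<and> R \<subseteq> {..<n} \<and> card R \<le> N \<and>
          (\<forall>x\<in>C. \<forall>y\<in>C. hdist_on R x y \<noteq> 0 \<longrightarrow> \<rho> \<le> hdist_on R x y)" by (rule exE)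
        note R = R0[THEN conjunct1] R0[THEN conjunct2, THEN conjunct1]
          R0[THEN conjunct2, THEN conjunct2, THEN conjunct1] R0[THEN conjunct2, THEN conjunct2, THEN conjunct2]
        have fR: "finite R" using R(2) finite_subset by blast
        define S' where "S' = S \<union> R"
        have S'sub: "S' \<subseteq> {..<n}" using S R by (auto simp: S'_def)
        have cS': "card S' = card S + card (R - S)"
        proof -
          have "S \<union> (R - S) = S'" by (auto simp: S'_def)
          moreover have "card (S \<union> (R - S)) = card S + card (R - S)"
            using fS fR by (intro card_Un_disjoint) auto
          ultimately show ?thesis by simp
        qed
        have t1: "card (R - S) \<ge> 1"
        proof -
          have "R - S \<noteq> {}" using i R by blast
          thus ?thesis using fR by (simp add: Suc_le_eq card_gt_0_iff)
        qed
        have "card (R - S) \<le> card R" using fR by (simp add: card_mono)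
        hence tN: "card (R - S) \<le> N" using R(3) by linarith
        have cS'n: "card S' \<le> n" using card_mono[OF _ S'sub] by simp
        have lt: "n - card S' < m" using m cS' t1 cS'n by linarith
        have IH: "real (card (prj {..<n} ` C)) \<le> real (card (prj S' ` C)) * real q powr (real (n - card S') * real r / real N)"
          using less.IH[OF lt] S'sub by blast
        have st: "card (prj S' ` C) \<le> card (prj S ` C) * q ^ (card (R - S) + 1 - \<rho>)"
          unfolding S'_def by (rule step_bound[OF Cw fC R(2) S R(4)]) (use rho in simp)
        have pb: "real (q ^ (card (R - S) + 1 - \<rho>)) \<le> real q powr (real (card (R - S)) * real r / real N)"
          unfolding N_def by (rule pow_bound) (use q rho r tN in \<open>simp_all add: N_def\<close>)
        have "real (card (prj S' ` C)) \<le> real (card (prj S ` C)) * real (q ^ (card (R - S) + 1 - \<rho>))"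
          using st by (simp only: of_nat_mult[symmetric] of_nat_le_iff)
        also have "\<dots> \<le> real (card (prj S ` C)) * real q powr (real (card (R - S)) * real r / real N)"
          by (rule mult_left_mono[OF pb]) simp
        finally have A: "real (card (prj S' ` C)) \<le> real (card (prj S ` C)) * real q powr (real (card (R - S)) * real r / real N)" .
        have ex: "real (card (R - S)) * real r / real N + real (n - card S') * real r / real N
            = real (n - card S) * real r / real N"
        proof -
          have "real (n - card S) = real (card (R - S)) + real (n - card S')"
            using cS' cS'n cS by (simp add: of_nat_diff)
          thus ?thesis by (simp only: add_divide_distrib[symmetric] distrib_right[symmetric])
        qed
        have "real (card (prj {..<n} ` C)) \<le> real (card (prj S' ` C)) * real q powr (real (n - card S') * real r / real N)"
          by (rule IH)
        also have "\<dots> \<le> real (card (prj S ` C)) * real q powr (real (card (R - S)) * real r / real N)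
              * real q powr (real (n - card S') * real r / real N)"
          by (rule mult_right_mono[OF A]) simp
        also have "\<dots> = real (card (prj S ` C)) * real q powr (real (n - card S) * real r / real N)"
          by (simp only: mult.assoc powr_add[symmetric] ex)
        finally show ?thesis .
      qed
    qed
  qed
  have M: "real (card (prj {..<n} ` C)) \<le> real (card (prj {} ` C)) * real q powr (real n * real r / real N)"
    using main[of n] by simp
  have c0: "card (prj {} ` C) = 1"
  proof -
    obtain x0 where "x0 \<in> C" using Cne by blast
    hence "prj {} ` C = {prj {} x0}" by (auto simp: prj_def)
    thus ?thesis by simp
  qed
  have inj: "inj_on (prj {..<n}) C"
  proof (rule inj_onI)
    fix x y assume "x \<in> C" "y \<in> C" "prj {..<n} x = prj {..<n} y"
    thus "x = y" using Cw by (intro nth_equalityI) (auto simp: prj_eq_iff)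
  qed
  have "card (prj {..<n} ` C) = card C" using inj by (simp add: card_image)
  thus ?thesis using M c0 by (simp add: N_def)
qed



lemma concat_nth_block:
  assumes "\<forall>x\<in>set xs. length x = N" "j < length xs" "l < N"
  shows "concat xs ! (j * N + l) = xs ! j ! l"
  using assms
proof (induction xs arbitrary: j)
  case Nil thus ?case by simp
next
  case (Cons a xs)
  show ?case
  proof (cases j)
    case 0 thus ?thesis using Cons.prems by (simp add: nth_append)
  next
    case (Suc j')
    have la: "length a = N" using Cons.prems by simp
    have "concat (a # xs) ! (j * N + l) = concat xs ! (j' * N + l)"
      using Suc la by (simp add: nth_append)
    also have "\<dots> = xs ! j' ! l" using Cons.IH[of j'] Cons.prems Suc by simp
    finally show ?thesis using Suc by simp
  qed
qed

lemma length_concat_const: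
  assumes "\<forall>x\<in>set xs. length x = N" shows "length (concat xs) = length xs * N"
  using assms by (induction xs) auto

lemma MDS_props:
  assumes M: "is_MDS q N \<rho> C0" and N: "N = r + \<rho> - 1" and rho: "\<rho> \<ge> 2" and r: "r \<ge> 1"
  shows "C0 \<subseteq> words q N" "card C0 = q ^ r" "finite C0"
    "\<forall>x\<in>C0. \<forall>y\<in>C0. x \<noteq> y \<longrightarrow> \<rho> \<le> hdist x y"
proof -
  show sub: "C0 \<subseteq> words q N" using M by (simp add: is_MDS_def is_code_def)
  have e: "N - \<rho> + 1 = r" using N rho r by simp
  show "card C0 = q ^ r" using M e unfolding is_MDS_def by metis
  show fC: "finite C0"
  proof (rule finite_subset[OF sub])
    show "finite (words q N)" unfolding words_def
      using finite_lists_length_eq[of "{..<q}" N] by (simp add: conj_commute)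
  qed
  show "\<forall>x\<in>C0. \<forall>y\<in>C0. x \<noteq> y \<longrightarrow> \<rho> \<le> hdist x y"
  proof (intro ballI impI)
    fix x y assume xy: "x \<in> C0" "y \<in> C0" "x \<noteq> y"
    have fin: "finite {hdist x y | x y. x \<in> C0 \<and> y \<in> C0 \<and> x \<noteq> y}"
    proof (rule finite_subset)
      show "{hdist x y | x y. x \<in> C0 \<and> y \<in> C0 \<and> x \<noteq> y} \<subseteq> (\<lambda>(x, y). hdist x y) ` (C0 \<times> C0)" by auto
      show "finite ((\<lambda>(x, y). hdist x y) ` (C0 \<times> C0))" using fC by simp
    qed
    have "min_dist C0 \<le> hdist x y" unfolding min_dist_def
      by (rule Min_le[OF fin]) (use xy in blast)
    thus "\<rho> \<le> hdist x y" using M by (simp add: is_MDS_def)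
  qed
qed

definition prodcode :: "nat list set \<Rightarrow> nat \<Rightarrow> nat list set" where
  "prodcode C0 m = concat ` {xs. set xs \<subseteq> C0 \<and> length xs = m}"

lemma prodcode_card:
  assumes "C0 \<subseteq> words q N" "finite C0"
  shows "card (prodcode C0 m) = card C0 ^ m"
proof -
  have inj: "inj_on concat {xs. set xs \<subseteq> C0 \<and> length xs = m}"
  proof (rule inj_onI)
    fix xs ys assume xs: "xs \<in> {xs. set xs \<subseteq> C0 \<and> length xs = m}" and ys: "ys \<in> {xs. set xs \<subseteq> C0 \<and> length xs = m}"
      and e: "concat xs = concat ys"
    have "\<forall>(x, y) \<in> set (zip xs ys). length x = length y"
    proof
      fix p assume "p \<in> set (zip xs ys)"
      then obtain x y where p: "p = (x, y)" "x \<in> set xs" "y \<in> set ys"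
        by (metis set_zip_leftD set_zip_rightD surj_pair)
      hence "x \<in> words q N" "y \<in> words q N" using xs ys assms by auto
      thus "case p of (x, y) \<Rightarrow> length x = length y" using p by (simp add: words_def)
    qed
    moreover have "length xs = length ys" using xs ys by simp
    ultimately show "xs = ys" using e concat_eq_concat_iff by blast
  qed
  have "card (prodcode C0 m) = card {xs. set xs \<subseteq> C0 \<and> length xs = m}"
    unfolding prodcode_def using inj by (simp add: card_image)
  also have "\<dots> = card C0 ^ m" using assms(2) by (rule card_lists_length_eq)
  finally show ?thesis .
qed

lemma prodcode_LRC:
  assumes sub: "C0 \<subseteq> words q N" and ne: "C0 \<noteq> {}" and Npos: "N \<ge> 1" and NN: "N \<le> r + \<rho> - 1"
    and dist: "\<forall>x\<in>C0. \<forall>y\<in>C0. x \<noteq> y \<longrightarrow> \<rho> \<le> hdist x y"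
  shows "is_LRC q (m * N) r \<rho> (prodcode C0 m)"
proof -
  have lenC0: "\<forall>x\<in>C0. length x = N" using sub by (auto simp: words_def)
  have code: "is_code q (m * N) (prodcode C0 m)"
    unfolding is_code_def
  proof
    fix z assume "z \<in> prodcode C0 m"
    then obtain xs where xs: "set xs \<subseteq> C0" "length xs = m" "z = concat xs" by (auto simp: prodcode_def)
    have "length z = m * N" using xs lenC0 length_concat_const[of xs N] by auto
    moreover have "set z \<subseteq> {..<q}" using xs sub by (auto simp: words_def)
    ultimately show "z \<in> words q (m * N)" by (simp add: words_def)
  qed
  have nonempty: "prodcode C0 m \<noteq> {}"
  proof -
    obtain c where "c \<in> C0" using ne by blast
    hence "concat (replicate m c) \<in> prodcode C0 m" unfolding prodcode_def by (intro imageI) auto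
    thus ?thesis by blast
  qed
  have loc: "\<exists>R. i \<in> R \<and> R \<subseteq> {..<m * N} \<and> card R \<le> r + \<rho> - 1 \<and>
        (\<forall>x\<in>prodcode C0 m. \<forall>y\<in>prodcode C0 m. hdist_on R x y \<noteq> 0 \<longrightarrow> \<rho> \<le> hdist_on R x y)"
    if i: "i < m * N" for i
  proof -
    define j where "j = i div N"
    define R where "R = {j * N ..< j * N + N}"
    have d: "j * N + i mod N = i" unfolding j_def by (rule div_mult_mod_eq)
    have "i mod N < N" using Npos by simp
    hence ij: "j * N \<le> i" "i < j * N + N" using d by linarith+
    have jm: "j < m" using i Npos unfolding j_def by (simp add: div_less_iff_less_mult)
    have "Suc j * N \<le> m * N" using jm by (intro mult_le_mono1) simp
    hence "j * N + N \<le> m * N" by simp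
    hence Rsub: "R \<subseteq> {..<m * N}" unfolding R_def by auto
    have cR: "card R = N" unfolding R_def by simp
    have dR: "\<rho> \<le> hdist_on R x y" if x: "x \<in> prodcode C0 m" and y: "y \<in> prodcode C0 m" and nz: "hdist_on R x y \<noteq> 0" for x y
    proof -
      obtain xs where xs: "set xs \<subseteq> C0" "length xs = m" "x = concat xs" using x by (auto simp: prodcode_def)
      obtain ys where ys: "set ys \<subseteq> C0" "length ys = m" "y = concat ys" using y by (auto simp: prodcode_def)
      have lx: "\<forall>z\<in>set xs. length z = N" and ly: "\<forall>z\<in>set ys. length z = N" using xs ys lenC0 by auto
      have eqset: "{k \<in> R. x ! k \<noteq> y ! k} = (\<lambda>l. j * N + l) ` {l \<in> {..<N}. xs ! j ! l \<noteq> ys ! j ! l}"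
      proof
        show "{k \<in> R. x ! k \<noteq> y ! k} \<subseteq> (\<lambda>l. j * N + l) ` {l \<in> {..<N}. xs ! j ! l \<noteq> ys ! j ! l}"
        proof
          fix k assume k: "k \<in> {k \<in> R. x ! k \<noteq> y ! k}"
          define l where "l = k - j * N"
          have kl: "k = j * N + l" "l < N" using k unfolding R_def l_def by auto
          have "xs ! j ! l \<noteq> ys ! j ! l" using k kl concat_nth_block[OF lx, of j l] concat_nth_block[OF ly, of j l] xs ys jm by auto
          thus "k \<in> (\<lambda>l. j * N + l) ` {l \<in> {..<N}. xs ! j ! l \<noteq> ys ! j ! l}" using kl by auto
        qed
        show "(\<lambda>l. j * N + l) ` {l \<in> {..<N}. xs ! j ! l \<noteq> ys ! j ! l} \<subseteq> {k \<in> R. x ! k \<noteq> y ! k}"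
          using concat_nth_block[OF lx, of j] concat_nth_block[OF ly, of j] xs ys jm by (auto simp: R_def)
      qed
      have xj: "xs ! j \<in> C0" "ys ! j \<in> C0" using xs ys jm by auto
      have lxj: "length (xs ! j) = N" using xj lenC0 by auto
      have "hdist_on R x y = card {l \<in> {..<N}. xs ! j ! l \<noteq> ys ! j ! l}"
        unfolding hdist_on_def eqset by (rule card_image) (simp add: inj_on_def)
      also have "\<dots> = hdist (xs ! j) (ys ! j)" by (simp add: hdist_def hdist_on_def lxj)
      finally have hd: "hdist_on R x y = hdist (xs ! j) (ys ! j)" .
      have "xs ! j \<noteq> ys ! j"
      proof
        assume "xs ! j = ys ! j"
        hence "hdist (xs ! j) (ys ! j) = 0" by (simp add: hdist_def hdist_on_def)
        thus False using nz hd by simp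
      qed
      thus ?thesis using dist xj hd by auto
    qed
    show ?thesis
      by (rule exI[of _ R]) (use ij Rsub cR NN dR in \<open>auto simp: R_def\<close>)
  qed
  show ?thesis unfolding is_LRC_def using code nonempty loc by blast
qed



lemma words_finite: "finite (words q n)"
  unfolding words_def using finite_lists_length_eq[of "{..<q}" n] by (simp add: conj_commute)

lemma LRC_set_finite: "finite {C. is_LRC q n r \<rho> C \<and> min_dist_ge d C}"
proof (rule finite_subset)
  show "{C. is_LRC q n r \<rho> C \<and> min_dist_ge d C} \<subseteq> Pow (words q n)"
    by (auto simp: is_LRC_def is_code_def)
  have "finite (words q n)" unfolding words_def
    using finite_lists_length_eq[of "{..<q}" n] by (simp add: conj_commute)
  thus "finite (Pow (words q n))" by simp
qed

lemma single_LRC: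
  assumes "q \<ge> 1" "r \<ge> 1" "\<rho> \<ge> 1"
  shows "is_LRC q n r \<rho> {replicate n 0}"
proof -
  have "is_code q n {replicate n 0}" using assms by (auto simp: is_code_def words_def)
  moreover have "\<exists>R. i \<in> R \<and> R \<subseteq> {..<n} \<and> card R \<le> r + \<rho> - 1 \<and>
        (\<forall>x\<in>{replicate n 0}. \<forall>y\<in>{replicate n 0}. hdist_on R x y \<noteq> 0 \<longrightarrow> \<rho> \<le> hdist_on R x y)"
    if "i < n" for i
    by (rule exI[of _ "{i}"]) (use that assms in \<open>auto simp: hdist_on_def\<close>)
  ultimately show ?thesis unfolding is_LRC_def by blast
qed

theorem corollary2:
  fixes q r \<rho> :: nat
  assumes "q \<ge> 2" and "r \<ge> 1" and "\<rho> \<ge> 2"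
    and "\<exists>C. is_MDS q (r + \<rho> - 1) \<rho> C"
  shows "R_LRC q r \<rho> 0 = ereal (real r / real (r + \<rho> - 1))"
proof -
  define N where "N = r + \<rho> - 1"
  have q: "q \<ge> 2" and r: "r \<ge> 1" and rho: "\<rho> \<ge> 2" using assms by auto
  obtain C0 where C0: "is_MDS q N \<rho> C0" using assms(4) unfolding N_def by blast
  note P = MDS_props[OF C0 N_def rho r]
  have Npos: "N \<ge> 1" using r rho by (simp add: N_def)
  have Nr: "real N > 0" using Npos by simp
  define M where "M n = M_LRC q n r \<rho> 0" for n
  define a where "a n = ereal (log (real q) (real (M n)) / real n)" for n
  have Rdef: "R_LRC q r \<rho> 0 = limsup a"
    unfolding R_LRC_def a_def M_def by simp
  have setM: "finite {C. is_LRC q n r \<rho> C \<and> min_dist_ge 0 C}" for n by (rule LRC_set_finite)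
  have mdg: "min_dist_ge 0 C" for C by (simp add: min_dist_ge_def)
  have upper: "a n \<le> ereal (real r / real N)" for n
  proof (cases "n = 0")
    case True thus ?thesis by (simp add: a_def)
  next
    case False
    have "{replicate n 0} \<in> {C. is_LRC q n r \<rho> C \<and> min_dist_ge 0 C}"
      using single_LRC[of q r \<rho> n] q r rho mdg by simp
    hence ne: "card ` {C. is_LRC q n r \<rho> C \<and> min_dist_ge 0 C} \<noteq> {}" by blast
    have "M n \<in> card ` {C. is_LRC q n r \<rho> C \<and> min_dist_ge 0 C}"
      unfolding M_def M_LRC_def by (rule Max_in) (use setM ne in simp_all)
    then obtain C where C: "is_LRC q n r \<rho> C" "M n = card C" by blast
    have cb: "real (card C) \<le> real q powr (real n * real r / real N)"
      using LRC_upper[OF C(1) q rho r] by (simp add: N_def)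
    have "C \<subseteq> words q n" using C(1) by (simp add: is_LRC_def is_code_def)
    hence fC: "finite C" using words_finite finite_subset by blast
    have "C \<noteq> {}" using C(1) by (simp add: is_LRC_def)
    hence cpos: "real (card C) > 0" using fC by (simp add: card_gt_0_iff)
    have "log (real q) (real (card C)) \<le> log (real q) (real q powr (real n * real r / real N))"
      using cb cpos q by (subst log_le_cancel_iff) auto
    also have "\<dots> = real n * real r / real N" using q by simp
    finally have L: "log (real q) (real (M n)) \<le> real n * real r / real N" using C(2) by simp
    have "log (real q) (real (M n)) / real n \<le> real n * real r / real N / real n"
      by (rule divide_right_mono[OF L]) simp
    also have "\<dots> = real r / real N" using False by simp
    finally show ?thesis by (simp add: a_def)
  qed
  have lower: "a ((k + 1) * N) = ereal (real r / real N)" for k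
  proof -
    define n where "n = (k + 1) * N"
    have PL: "is_LRC q n r \<rho> (prodcode C0 (k + 1))"
      unfolding n_def by (rule prodcode_LRC[OF P(1) _ Npos]) (use P q in \<open>auto simp: N_def\<close>)
    have pc: "card (prodcode C0 (k + 1)) = q ^ (r * (k + 1))"
      using prodcode_card[OF P(1) P(3)] P(2) by (simp add: power_add power_mult)
    have "card (prodcode C0 (k + 1)) \<le> M n"
      unfolding M_def M_LRC_def by (rule Max_ge) (use setM PL mdg in auto)
    hence Mge: "real q ^ (r * (k + 1)) \<le> real (M n)" using pc
      by (metis of_nat_le_iff of_nat_power)
    have "real (r * (k + 1)) = log (real q) (real q ^ (r * (k + 1)))" using q by simp
    also have "\<dots> \<le> log (real q) (real (M n))"
    proof -
      have "(0::real) < real q ^ (r * (k + 1))" using q by simp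
      hence "real (M n) > 0" using Mge by linarith
      thus ?thesis using Mge q by (subst log_le_cancel_iff) auto
    qed
    finally have lg: "real (r * (k + 1)) \<le> log (real q) (real (M n))" .
    have nr: "real n = real (k + 1) * real N" by (simp add: n_def algebra_simps)
    have npos: "real n > 0" using nr Nr by simp
    have e1: "real (r * (k + 1)) / real n = (real (k + 1) * real r) / (real (k + 1) * real N)"
      unfolding nr by (simp only: of_nat_mult mult.commute)
    have e2: "(real (k + 1) * real r) / (real (k + 1) * real N) = real r / real N"
      by (rule mult_divide_mult_cancel_left) simp
    have "real r / real N = real (r * (k + 1)) / real n" using e1 e2 by simp
    also have "\<dots> \<le> log (real q) (real (M n)) / real n"
      using lg npos by (simp add: divide_right_mono)
    finally have "ereal (real r / real N) \<le> a n" by (simp add: a_def)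
    moreover have "a n \<le> ereal (real r / real N)" by (rule upper)
    ultimately show ?thesis unfolding n_def by simp
  qed
  have le: "limsup a \<le> ereal (real r / real N)"
    by (rule Limsup_bounded) (simp add: upper)
  have sm: "strict_mono (\<lambda>k. (k + 1) * N)" using Npos by (auto simp: strict_mono_def)
  have "limsup (a \<circ> (\<lambda>k. (k + 1) * N)) \<le> limsup a" by (rule limsup_subseq_mono[OF sm])
  moreover have "a \<circ> (\<lambda>k. (k + 1) * N) = (\<lambda>_. ereal (real r / real N))" using lower by auto
  ultimately have ge: "ereal (real r / real N) \<le> limsup a" by (simp add: Limsup_const)
  show ?thesis using le ge Rdef by (simp add: N_def)
qed


end
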